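(* Suppose that $F_k$ satisfies \begin{equation*} \begin{bmatrix} R^{-1} & F_k \\ F_k^T & -\alpha \big((A+BF_k)^T\tilde{P}+\tilde{P}(A+BF_k)\big)-Q \end{bmatrix} \succ 0. \end{equation*} Then the optimization problem of maximizing $\delta_k$ subject to the performance constraint holding for every $\xi \in [0,\delta_k]$, with the feedback gain fixed to $F_k$, is feasible (i.e., it admits a strictly positive $\delta_k$).
   Context: Consider the LTI system $\dot x(t)=Ax(t)+Bu(t)$, $x(0)=x_0$, with $(A,B)$ stabilizable, under the sample-and-hold law $u(t)=F_k x_k$, $x_k:=x(t_k)$, for $t\in[t_k,t_k+\delta_k)$. Let $Q\succ 0$, $R\succ 0$, let $\tilde F$ be a stabilizing feedback gain and $\tilde P\succ 0$ the unique solution of $(A+B\tilde F)^T\tilde P+\tilde P(A+B\tilde F)+Q+\tilde F^TR\tilde F=0$, and let $V(x)=x^T\tilde P x$ and $\alpha>1$. The cost-to-go is $J_k(F_k,\xi;x_k)=\int_{t_k}^{t_k+\xi}(x(t)^TQx(t)+u(t)^TRu(t))\,dt$. The performance constraint is $J_k(F_k,\xi;x_k)\le \alpha\big(V(x(t_k))-V(x(t_k+\xi))\big)$. The problem considered is: maximize $\delta_k$ subject to this constraint for every $\xi\in[0,\delta_k]$, with $F_k$ fixed. *)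

theory Defs
  imports "HOL-Analysis.Analysis"
begin

definition pos_def :: "real^'n^'n \<Rightarrow> bool" where
  "pos_def M \<longleftrightarrow> transpose M = M \<and> (\<forall>x. x \<noteq> 0 \<longrightarrow> x \<bullet> (M *v x) > 0)"

definition cmat :: "real^'n^'m \<Rightarrow> complex^'n^'m" where
  "cmat A = (\<chi> i j. complex_of_real (A $ i $ j))"

definition hurwitz :: "real^'n^'n \<Rightarrow> bool" where
  "hurwitz A \<longleftrightarrow> (\<forall>(e::complex) v. v \<noteq> 0 \<and> cmat A *v v = e *s v \<longrightarrow> Re e < 0)"

definition stabilizable :: "real^'n^'n \<Rightarrow> real^'m^'n \<Rightarrow> bool" where
  "stabilizable A B \<longleftrightarrow> (\<exists>K :: real^'n^'m. hurwitz (A + B ** K))"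

definition block_mat ::
  "real^'m^'m \<Rightarrow> real^'n^'m \<Rightarrow> real^'m^'n \<Rightarrow> real^'n^'n \<Rightarrow> real^('m + 'n)^('m + 'n)" where
  "block_mat M11 M12 M21 M22 = (\<chi> i j.
     (case i of Inl a \<Rightarrow> (case j of Inl b \<Rightarrow> M11 $ a $ b | Inr b \<Rightarrow> M12 $ a $ b)
              | Inr a \<Rightarrow> (case j of Inl b \<Rightarrow> M21 $ a $ b | Inr b \<Rightarrow> M22 $ a $ b)))"

end

theory Submission
  imports Defs
begin

lemma sum_UNIV_Plus:
  "sum (g :: 'a::finite + 'b::finite \<Rightarrow> 'c::comm_monoid_add) UNIV
     = sum (\<lambda>a. g (Inl a)) UNIV + sum (\<lambda>b. g (Inr b)) UNIV"
proof -
  have "sum g UNIV = sum g (UNIV <+> UNIV)" by simp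
  also have "\<dots> = sum (g \<circ> Inl) UNIV + sum (g \<circ> Inr) UNIV" by (rule sum.Plus) auto
  finally show ?thesis by (simp add: comp_def)
qed

lemma scaleR_mat_vec: "((k::real) *\<^sub>R (M::real^'n^'m)) *v v = k *\<^sub>R (M *v v)"
  by (simp add: matrix_vector_mult_def vec_eq_iff sum_distrib_left algebra_simps)

lemma block_quad:
  fixes y :: "real^'m" and z :: "real^'n"
  shows "(\<chi> i. case i of Inl a \<Rightarrow> y $ a | Inr b \<Rightarrow> z $ b) \<bullet>
     (block_mat M11 M12 M21 M22 *v (\<chi> i. case i of Inl a \<Rightarrow> y $ a | Inr b \<Rightarrow> z $ b))
   = y \<bullet> (M11 *v y) + y \<bullet> (M12 *v z) + z \<bullet> (M21 *v y) + z \<bullet> (M22 *v z)"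
  unfolding inner_vec_def matrix_vector_mult_def block_mat_def
  by (simp add: sum_UNIV_Plus sum.distrib sum_distrib_left algebra_simps)

lemma pd_inv:
  fixes R :: "real^'m^'m"
  assumes "pos_def R"
  shows "matrix_inv R ** R = mat 1"
proof -
  have "\<forall>x. R *v x = 0 \<longrightarrow> x = 0"
  proof (intro allI impI)
    fix x assume "R *v x = 0"
    then have "x \<bullet> (R *v x) = 0" by simp
    then show "x = 0" using assms unfolding pos_def_def by force
  qed
  then obtain B where B: "B ** R = mat 1" using matrix_left_invertible_ker by blast
  then have "R ** B = mat 1" using matrix_left_right_inverse by blast
  then have "\<exists>A'. R ** A' = mat 1 \<and> A' ** R = mat 1" using B by blast
  then show ?thesis unfolding matrix_inv_def by (metis (mono_tags, lifting) someI_ex)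
qed
lemma aux_ineq: "(a::real) \<le> K * b \<Longrightarrow> 0 \<le> b \<Longrightarrow> 2 * a - (2 * K + 1) * b \<le> 0"
  by (simp add: algebra_simps)

lemma zero_traj:
  fixes A :: "real^'n^'n" and x :: "real \<Rightarrow> real^'n"
  assumes der: "\<And>t. t \<ge> tk \<Longrightarrow> (x has_vector_derivative (A *v x t)) (at t within {tk..})"
    and x0: "x tk = 0" and b: "b \<ge> tk"
  shows "x b = 0"
proof (cases "b = tk")
  case True then show ?thesis using x0 by simp
next
  case False
  with b have lt: "tk < b" by simp
  obtain K where K: "K > 0" "\<And>v. norm (A *v v) \<le> norm v * K"
    using bounded_linear.pos_bounded[OF matrix_vector_mul_bounded_linear[of A]] by blast
  define c where "c = 2 * K + 1"
  define w where "w t = exp (- c * t) * (x t \<bullet> x t)" for t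
  have dw: "(w has_real_derivative (exp (- c * t) * (- c) * (x t \<bullet> x t)
            + exp (- c * t) * (2 * (x t \<bullet> (A *v x t))))) (at t within {tk..})"
    if "t \<ge> tk" for t
  proof -
    have dx: "(x has_derivative (\<lambda>h. h *\<^sub>R (A *v x t))) (at t within {tk..})"
      using der[OF that] by (simp add: has_vector_derivative_def)
    have di: "((\<lambda>s. x s \<bullet> x s) has_derivative
              (\<lambda>h. x t \<bullet> (h *\<^sub>R (A *v x t)) + (h *\<^sub>R (A *v x t)) \<bullet> x t)) (at t within {tk..})"
      by (rule has_derivative_inner[OF dx dx])
    have "(\<lambda>h. x t \<bullet> (h *\<^sub>R (A *v x t)) + (h *\<^sub>R (A *v x t)) \<bullet> x t)
          = (\<lambda>h. (2 * (x t \<bullet> (A *v x t))) * h)"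
      by (auto simp: inner_commute algebra_simps)
    with di have di2: "((\<lambda>s. x s \<bullet> x s) has_real_derivative (2 * (x t \<bullet> (A *v x t)))) (at t within {tk..})"
      by (simp add: has_field_derivative_def)
    have de: "((\<lambda>s. exp (- c * s)) has_real_derivative (exp (- c * t) * (- c))) (at t within {tk..})"
      by (auto intro!: derivative_eq_intros)
    show ?thesis unfolding w_def using DERIV_mult[OF de di2] by (simp only: ac_simps)
  qed
  have cont: "continuous_on {tk..b} w"
  proof -
    have "continuous (at t within {tk..}) w" if "t \<in> {tk..b}" for t
      using dw[of t] that DERIV_continuous by auto
    moreover have "{tk..b} \<subseteq> {tk..}" by auto
    ultimately show ?thesis unfolding continuous_on_eq_continuous_within
      using continuous_within_subset by blast
  qed
  have dat: "(w has_real_derivative (exp (- c * t) * (- c) * (x t \<bullet> x t)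
            + exp (- c * t) * (2 * (x t \<bullet> (A *v x t))))) (at t)" if "tk < t" for t
  proof -
    have eq: "at t within {tk..} = at t"
      by (rule at_within_interior) (simp add: interior_real_atLeast that)
    have "tk \<le> t" using that by simp
    from dw[OF this] show ?thesis unfolding eq .
  qed
  have diff: "\<And>t. tk < t \<Longrightarrow> t < b \<Longrightarrow> w differentiable (at t)"
    using dat real_differentiable_def by blast
  obtain l z where lz: "tk < z" "z < b" "(w has_real_derivative l) (at z)" "w b - w tk = (b - tk) * l"
    using MVT[OF lt cont diff] by blast
  have l: "l = exp (- c * z) * (- c) * (x z \<bullet> x z) + exp (- c * z) * (2 * (x z \<bullet> (A *v x z)))"
    using DERIV_unique[OF lz(3) dat[OF lz(1)]] .
  have "x z \<bullet> (A *v x z) \<le> norm (x z) * norm (A *v x z)" by (rule norm_cauchy_schwarz)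
  also have "\<dots> \<le> norm (x z) * (norm (x z) * K)" using K(2) by (simp add: mult_left_mono)
  also have "\<dots> = K * (x z \<bullet> x z)"
    by (metis dot_square_norm power2_eq_square mult.commute mult.left_commute)
  finally have le1: "x z \<bullet> (A *v x z) \<le> K * (x z \<bullet> x z)" .
  have "2 * (x z \<bullet> (A *v x z)) - c * (x z \<bullet> x z) \<le> 0"
    unfolding c_def by (rule aux_ineq[OF le1 inner_ge_zero])
  moreover have "l = exp (- c * z) * (2 * (x z \<bullet> (A *v x z)) - c * (x z \<bullet> x z))"
    unfolding l by (simp add: algebra_simps)
  ultimately have "l \<le> 0" by (simp add: mult_nonneg_nonpos)
  then have "w b \<le> 0" using lz(4) lt x0 unfolding w_def
    by (simp add: mult_nonneg_nonpos)
  then have "x b \<bullet> x b \<le> 0" unfolding w_def by (simp add: mult_le_0_iff)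
  then show ?thesis by (metis inner_eq_zero_iff inner_ge_zero order.antisym)
qed
lemma uminus_mat_vec: "(- (M::real^'n^'m)) *v v = - (M *v v)"
  by (simp add: matrix_vector_mult_def vec_eq_iff sum_negf)

lemma transpose_inner: "z \<bullet> (transpose M *v y) = y \<bullet> (M *v (z::real^'n))"
  by (metis dot_lmul_matrix inner_commute transpose_matrix_vector)

theorem proposition2:
  fixes A :: "real^'n^'n" and B :: "real^'m^'n"
    and Q :: "real^'n^'n" and R :: "real^'m^'m"
    and Ft :: "real^'n^'m" and Pt :: "real^'n^'n"
    and Fk :: "real^'n^'m" and \<alpha> :: real
    and x :: "real \<Rightarrow> real^'n" and tk :: real
  assumes stab: "stabilizable A B"
    and Q_pd: "pos_def Q" and R_pd: "pos_def R"
    and Ft_stab: "hurwitz (A + B ** Ft)"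
    and Pt_lyap: "transpose (A + B ** Ft) ** Pt + Pt ** (A + B ** Ft) + Q
                    + transpose Ft ** R ** Ft = 0"
    and Pt_unique: "\<And>P. transpose (A + B ** Ft) ** P + P ** (A + B ** Ft) + Q
                    + transpose Ft ** R ** Ft = 0 \<Longrightarrow> P = Pt"
    and Pt_pd: "pos_def Pt"
    and alpha: "\<alpha> > 1"
    and traj: "\<And>t. t \<ge> tk \<Longrightarrow>
         (x has_vector_derivative (A *v x t + B *v (Fk *v x tk))) (at t within {tk..})"
    and LMI: "pos_def (block_mat (matrix_inv R) Fk (transpose Fk)
               (- \<alpha> *\<^sub>R (transpose (A + B ** Fk) ** Pt + Pt ** (A + B ** Fk)) - Q))"
  shows "\<exists>\<delta>>0. \<forall>\<xi>\<in>{0..\<delta>}.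
           integral {tk..tk + \<xi>}
             (\<lambda>t. x t \<bullet> (Q *v x t) + (Fk *v x tk) \<bullet> (R *v (Fk *v x tk)))
           \<le> \<alpha> * (x tk \<bullet> (Pt *v x tk) - x (tk + \<xi>) \<bullet> (Pt *v x (tk + \<xi>)))"
proof (cases "x tk = 0")
  case True
  have z: "x t = 0" if "t \<ge> tk" for t
    by (rule zero_traj[of tk x A]) (use traj True that in auto)
  have "integral {tk..tk + \<xi>}
             (\<lambda>t. x t \<bullet> (Q *v x t) + (Fk *v x tk) \<bullet> (R *v (Fk *v x tk))) = 0" for \<xi>
  proof -
    have "integral {tk..tk + \<xi>}
             (\<lambda>t. x t \<bullet> (Q *v x t) + (Fk *v x tk) \<bullet> (R *v (Fk *v x tk)))
          = integral {tk..tk + \<xi>} (\<lambda>t. 0)"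
      by (rule integral_cong) (simp add: z True)
    then show ?thesis by simp
  qed
  then show ?thesis using z True by (intro exI[of _ 1]) auto
next
  case False
  define x0 where "x0 = x tk"
  define u where "u = Fk *v x0"
  define xd where "xd = A *v x0 + B *v u"
  define S where "S = {tk..tk+1}"
  define f where "f = (\<lambda>t. x t \<bullet> (Q *v x t) + (Fk *v x tk) \<bullet> (R *v (Fk *v x tk)))"
  define V where "V = (\<lambda>t. x t \<bullet> (Pt *v x t))"
  define h where "h = (\<lambda>t. \<alpha> * (V tk - V t) - integral {tk..t} f)"
  have x0: "x0 \<noteq> 0" using False x0_def by simp
  have Sk: "tk \<in> S" "S \<subseteq> {tk..}" unfolding S_def by auto
  have contx: "continuous_on S x"
  proof -
    have "continuous (at t within {tk..}) x" if "t \<in> S" for t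
    proof -
      have "tk \<le> t" using that Sk(2) by auto
      from has_vector_derivative_continuous[OF traj[OF this]] show ?thesis .
    qed
    then show ?thesis unfolding continuous_on_eq_continuous_within
      using continuous_within_subset Sk(2) by blast
  qed
  have contf: "continuous_on S f"
  proof -
    have "continuous_on S (\<lambda>t. Q *v x t)"
      using bounded_linear.continuous_on[OF matrix_vector_mul_bounded_linear contx] .
    then show ?thesis unfolding f_def
      by (intro continuous_on_add continuous_on_inner contx continuous_on_const)
  qed
  have dx: "(x has_derivative (\<lambda>s. s *\<^sub>R xd)) (at tk within S)"
    using traj[of tk] has_derivative_subset[OF _ Sk(2)]
    unfolding has_vector_derivative_def xd_def u_def x0_def by auto
  have dPx: "((\<lambda>t. Pt *v x t) has_derivative (\<lambda>s. Pt *v (s *\<^sub>R xd))) (at tk within S)"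
    by (rule bounded_linear.has_derivative[OF matrix_vector_mul_bounded_linear dx])
  define D where "D = x0 \<bullet> (Pt *v xd) + xd \<bullet> (Pt *v x0)"
  have dV0: "(V has_derivative (\<lambda>s. x tk \<bullet> (Pt *v (s *\<^sub>R xd)) + (s *\<^sub>R xd) \<bullet> (Pt *v x tk)))
         (at tk within S)"
    unfolding V_def by (rule has_derivative_inner[OF dx dPx])
  have "(\<lambda>s. x tk \<bullet> (Pt *v (s *\<^sub>R xd)) + (s *\<^sub>R xd) \<bullet> (Pt *v x tk)) = (\<lambda>s. D * s)"
    unfolding D_def x0_def by (auto simp: matrix_vector_mult_scaleR algebra_simps)
  with dV0 have dV: "(V has_real_derivative D) (at tk within S)"
    by (simp add: has_field_derivative_def)
  have dI: "((\<lambda>t. integral {tk..t} f) has_real_derivative f tk) (at tk within S)"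
    using integral_has_vector_derivative[OF contf[unfolded S_def]] Sk(1)
    unfolding S_def has_real_derivative_iff_has_vector_derivative by auto
  have dh: "(h has_real_derivative (\<alpha> * (0 - D) - f tk)) (at tk within S)"
    unfolding h_def
    by (intro DERIV_diff DERIV_cmult DERIV_const dV dI)
  \<comment> \<open>positivity of the derivative via the LMI\<close>
  define y where "y = - (R *v u)"
  define v :: "real^('m + 'n)" where "v = (\<chi> i. case i of Inl a \<Rightarrow> y $ a | Inr b \<Rightarrow> x0 $ b)"
  have "v \<noteq> 0"
  proof
    assume "v = 0"
    have "x0 $ b = 0" for b
    proof -
      have "v $ Inr b = x0 $ b" unfolding v_def by simp
      then show ?thesis using \<open>v = 0\<close> by simp
    qed
    then show False using x0 by (simp add: vec_eq_iff)
  qed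
  then have pos: "0 < v \<bullet> (block_mat (matrix_inv R) Fk (transpose Fk)
               (- \<alpha> *\<^sub>R (transpose (A + B ** Fk) ** Pt + Pt ** (A + B ** Fk)) - Q) *v v)"
    using LMI unfolding pos_def_def by blast
  have Rsym: "transpose R = R" using R_pd unfolding pos_def_def by blast
  have Ru: "(R *v u) \<bullet> u = u \<bullet> (R *v u)" using transpose_inner[of u R u] Rsym
    by (simp add: inner_commute)
  have T1: "y \<bullet> (matrix_inv R *v y) = u \<bullet> (R *v u)"
  proof -
    have "matrix_inv R *v y = - u"
    proof -
      have "matrix_inv R *v y = - (matrix_inv R *v (R *v u))"
        unfolding y_def by (metis diff_0 matrix_vector_mult_diff_distrib matrix_vector_mult_0_right)
      also have "\<dots> = - u" by (simp add: matrix_vector_mul_assoc pd_inv[OF R_pd])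
      finally show ?thesis .
    qed
    then show ?thesis unfolding y_def using Ru by simp
  qed
  have T2: "y \<bullet> (Fk *v x0) = - (u \<bullet> (R *v u))" unfolding y_def u_def[symmetric] using Ru by simp
  have T3: "x0 \<bullet> (transpose Fk *v y) = - (u \<bullet> (R *v u))"
    using transpose_inner[of x0 Fk y] T2 by simp
  have Acl: "(A + B ** Fk) *v x0 = xd"
    unfolding xd_def u_def by (simp add: matrix_vector_mult_add_rdistrib matrix_vector_mul_assoc)
  have T4: "x0 \<bullet> ((- \<alpha> *\<^sub>R (transpose (A + B ** Fk) ** Pt + Pt ** (A + B ** Fk)) - Q) *v x0)
      = - \<alpha> * D - x0 \<bullet> (Q *v x0)"
  proof -
    have "(transpose (A + B ** Fk) ** Pt + Pt ** (A + B ** Fk)) *v x0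
          = transpose (A + B ** Fk) *v (Pt *v x0) + Pt *v xd"
      by (simp add: matrix_vector_mult_add_rdistrib Acl xd_def u_def flip: matrix_vector_mul_assoc)
    then have M: "x0 \<bullet> ((transpose (A + B ** Fk) ** Pt + Pt ** (A + B ** Fk)) *v x0) = D"
    proof -
      have t: "x0 \<bullet> (transpose (A + B ** Fk) *v (Pt *v x0)) = xd \<bullet> (Pt *v x0)"
        using transpose_inner[of x0 "A + B ** Fk" "Pt *v x0"] Acl by (simp add: inner_commute)
      show ?thesis unfolding D_def \<open>_ = transpose (A + B ** Fk) *v (Pt *v x0) + Pt *v xd\<close>
        inner_add_right t by simp
    qed
    show ?thesis
      by (simp add: matrix_vector_mult_diff_rdistrib scaleR_mat_vec uminus_mat_vec inner_diff_right M)
  qed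
  have "v \<bullet> (block_mat (matrix_inv R) Fk (transpose Fk)
               (- \<alpha> *\<^sub>R (transpose (A + B ** Fk) ** Pt + Pt ** (A + B ** Fk)) - Q) *v v)
        = \<alpha> * (0 - D) - f tk"
    unfolding v_def block_quad T1 T2 T3 T4 f_def x0_def[symmetric] u_def[symmetric]
    using T2[unfolded u_def[symmetric]] by simp
  with pos have dpos: "0 < \<alpha> * (0 - D) - f tk" by simp
  obtain d where d: "d > 0" "\<And>e. e > 0 \<Longrightarrow> tk + e \<in> S \<Longrightarrow> e < d \<Longrightarrow> h tk < h (tk + e)"
    using has_real_derivative_pos_inc_right[OF dh dpos] by blast
  have h0: "h tk = 0" unfolding h_def by simp
  show ?thesis
  proof (intro exI[of _ "min (d/2) 1"] conjI ballI)
    show "0 < min (d/2) 1" using d by simp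
  next
    fix \<xi> assume xi: "\<xi> \<in> {0..min (d/2) 1}"
    show "integral {tk..tk + \<xi>}
             (\<lambda>t. x t \<bullet> (Q *v x t) + (Fk *v x tk) \<bullet> (R *v (Fk *v x tk)))
           \<le> \<alpha> * (x tk \<bullet> (Pt *v x tk) - x (tk + \<xi>) \<bullet> (Pt *v x (tk + \<xi>)))"
    proof (cases "\<xi> = 0")
      case True then show ?thesis by simp
    next
      case False
      then have "h tk < h (tk + \<xi>)" using xi d by (intro d(2)) (auto simp: S_def)
      then show ?thesis using h0 unfolding h_def V_def f_def by simp
    qed
  qed
qed

end
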